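(* For $j=1,2,3,4$ let $\mathcal{S}_j\subset\partial H^2_\mathbb{C}$ be the spinal sphere of $\gamma_j$. Then, for $k\in\mathbb{Z}$: $\mathcal{S}_1\cap G_1^k\mathcal{S}_1\neq\emptyset$ only if $-2\le k\le2$; $\mathcal{S}_1\cap G_1^k\mathcal{S}_2\neq\emptyset$ only if $-4\le k\le1$; $\mathcal{S}_1\cap G_1^k\mathcal{S}_3\neq\emptyset$ only if $-3\le k\le1$; $\mathcal{S}_1\cap G_1^k\mathcal{S}_4\neq\emptyset$ only if $-4\le k\le0$; $\mathcal{S}_2\cap G_1^k\mathcal{S}_2\neq\emptyset$ only if $-2\le k\le2$; $\mathcal{S}_2\cap G_1^k\mathcal{S}_3\neq\emptyset$ only if $-2\le k\le2$; $\mathcal{S}_2\cap G_1^k\mathcal{S}_4\neq\emptyset$ only if $-2\le k\le2$; $\mathcal{S}_3\cap G_1^k\mathcal{S}_3\neq\emptyset$ only if $-2\le k\le2$; $\mathcal{S}_3\cap G_1^k\mathcal{S}_4\neq\emptyset$ only if $-2\le k\le1$; $\mathcal{S}_4\cap G_1^k\mathcal{S}_4\neq\emptyset$ only if $-2\le k\le2$.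
   Context: Hermitian form on $\mathbb{C}^3$: $\langle V,W\rangle=V_1\overline{W_3}+V_2\overline{W_2}+V_3\overline{W_1}$; $\partial H^2_\mathbb{C}$ is the set of null complex lines. Let $$G_1=\begin{pmatrix}1&1&-\frac{1+i\sqrt7}{2}\\0&1&-1\\0&0&1\end{pmatrix},\quad G_3=\begin{pmatrix}1&0&0\\-1&1&0\\ \frac{-1+i\sqrt7}{2}&1&1\end{pmatrix},\quad G_2=G_3G_1^{-1}G_3^{-1}G_1,$$ $Q=(1,0,0)^T$, and $\gamma_1=G_2,\gamma_2=G_2^{-1},\gamma_3=G_3,\gamma_4=G_3^{-1}$. The spinal sphere of a matrix $G$ (with $GQ$ not proportional to $Q$) is $\{[Z]\in\partial H^2_\mathbb{C}: |\langle Z,Q\rangle|=|\langle Z,GQ\rangle|\}$, the boundary at infinity of the bisector $|\langle Z,Q\rangle|=|\langle Z,GQ\rangle|$. $G_1^k\mathcal{S}_j$ denotes the image of $\mathcal{S}_j$ under $G_1^k$. *)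

theory Defs
  imports "HOL-Analysis.Analysis"
begin

text \<open>Hermitian form of signature (2,1) on C^3:
  herm V W = V1 conj(W3) + V2 conj(W2) + V3 conj(W1).\<close>
definition herm :: "complex^3 \<Rightarrow> complex^3 \<Rightarrow> complex" where
  "herm V W = V$1 * cnj (W$3) + V$2 * cnj (W$2) + V$3 * cnj (W$1)"

text \<open>Points of the boundary at infinity are null complex lines; we represent
  a point by the set of its nonzero representatives, so subsets of the boundary
  are sets of nonzero null vectors closed under nonzero scaling.\<close>
definition null_vectors :: "(complex^3) set" where
  "null_vectors = {Z. Z \<noteq> 0 \<and> herm Z Z = 0}"

fun matpow :: "complex^3^3 \<Rightarrow> nat \<Rightarrow> complex^3^3" where
  "matpow A 0 = mat 1"
| "matpow A (Suc n) = A ** matpow A n"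

definition matzpow :: "complex^3^3 \<Rightarrow> int \<Rightarrow> complex^3^3" where
  "matzpow A k = (if 0 \<le> k then matpow A (nat k) else matpow (matrix_inv A) (nat (- k)))"

definition G1 :: "complex^3^3" where
  "G1 = vector [vector [1, 1, - (1 + \<i> * complex_of_real (sqrt 7)) / 2],
                vector [0, 1, -1],
                vector [0, 0, 1]]"

definition G3 :: "complex^3^3" where
  "G3 = vector [vector [1, 0, 0],
                vector [-1, 1, 0],
                vector [(-1 + \<i> * complex_of_real (sqrt 7)) / 2, 1, 1]]"

definition G2 :: "complex^3^3" where
  "G2 = G3 ** matrix_inv G1 ** matrix_inv G3 ** G1"

definition Qv :: "complex^3" where
  "Qv = vector [1, 0, 0]"

text \<open>Spinal sphere of G: boundary at infinity of the bisector equidistant from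
  Q and G Q.\<close>
definition spinal_sphere :: "complex^3^3 \<Rightarrow> (complex^3) set" where
  "spinal_sphere G = {Z \<in> null_vectors. cmod (herm Z Qv) = cmod (herm Z (G *v Qv))}"

definition gamma :: "nat \<Rightarrow> complex^3^3" where
  "gamma j = (if j = 1 then G2 else if j = 2 then matrix_inv G2
              else if j = 3 then G3 else matrix_inv G3)"

definition S :: "nat \<Rightarrow> (complex^3) set" where
  "S j = spinal_sphere (gamma j)"

definition act :: "complex^3^3 \<Rightarrow> (complex^3) set \<Rightarrow> (complex^3) set" where
  "act G A = (\<lambda>Z. G *v Z) ` A"

end

theory Submission imports Defs begin

lemma minv: assumes "invertible (A::complex^3^3)"
  shows "A ** matrix_inv A = mat 1 \<and> matrix_inv A ** A = mat 1"
  using assms unfolding invertible_def matrix_inv_def by (rule someI_ex)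

lemma minv_app: assumes "invertible (A::complex^3^3)" "A *v y = x"
  shows "matrix_inv A *v x = y"
  using minv[OF assms(1)] assms(2) by (metis matrix_vector_mul_assoc matrix_vector_mul_lid)

lemma minv_inv: assumes "invertible (A::complex^3^3)" shows "invertible (matrix_inv A)"
  using minv[OF assms] unfolding invertible_def by blast

lemma inv_G1: "invertible G1"
  by (simp add: invertible_det_nz det_3 G1_def)
lemma inv_G3: "invertible G3"
  by (simp add: invertible_det_nz det_3 G3_def)
lemma inv_G2: "invertible G2"
  unfolding G2_def by (intro invertible_mult inv_G1 inv_G3 minv_inv)

lemma mv3: "(A::complex^3^3) *v x = vector [A$1$1*x$1 + A$1$2*x$2 + A$1$3*x$3,
   A$2$1*x$1 + A$2$2*x$2 + A$2$3*x$3, A$3$1*x$1 + A$3$2*x$2 + A$3$3*x$3]"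
  by (simp add: vec_eq_iff forall_3 matrix_vector_mult_def sum_3)

lemma veq3: "((x::complex^3) = y) \<longleftrightarrow> x$1 = y$1 \<and> x$2 = y$2 \<and> x$3 = y$3"
  by (simp add: vec_eq_iff forall_3)

abbreviation "sv \<equiv> complex_of_real (sqrt 7)"
lemma svsq: "sv * sv = 7"
  by (simp flip: of_real_mult)

lemma G1Q: "G1 *v Qv = Qv" by (simp add: mv3 G1_def Qv_def veq3)
definition "aa = (vector [1, 1, (-1 - \<i> * sv)/2] :: complex^3)"
lemma G3aa: "G3 *v aa = Qv" by (simp add: mv3 G3_def Qv_def aa_def veq3 complex_eq_iff)
lemma iG3Q: "matrix_inv G3 *v Qv = aa" by (rule minv_app[OF inv_G3 G3aa])
definition "yy = (vector [2, (1 - \<i> * sv)/2, (-1 - \<i> * sv)/2] :: complex^3)"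
lemma G1yy: "G1 *v yy = aa"
  by (simp add: mv3 G1_def yy_def aa_def veq3 complex_eq_iff algebra_simps)
lemma key:
 assumes Z: "Z \<in> spinal_sphere G" and p: "G *v Qv = p" and p3: "p$3 \<noteq> 0" and pn: "herm p p = 0"
 shows "Z$3 \<noteq> 0 \<and> (Re(Z$2/Z$3) - Re(p$2/p$3))^2 \<le> 2 / cmod (p$3)"
proof -
  from Z have Zn: "Z \<noteq> 0" "herm Z Z = 0" and eq: "cmod (herm Z Qv) = cmod (herm Z p)"
    by (auto simp: spinal_sphere_def null_vectors_def p)
  have hQ: "herm Z Qv = Z$3" by (simp add: herm_def Qv_def)
  define w where "w = herm Z p"
  have cw: "cmod w = cmod (Z$3)" using eq hQ w_def by simp
  have Z3: "Z$3 \<noteq> 0"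
  proof
    assume z: "Z$3 = 0"
    then have "Z$2 * cnj (Z$2) = 0" using Zn(2) by (simp add: herm_def)
    then have z2: "Z$2 = 0" by simp
    have "w = 0" using cw z by simp
    then have "Z$1 * cnj (p$3) = 0" using z z2 by (simp add: w_def herm_def)
    then have "Z$1 = 0" using p3 by simp
    then have "Z = 0" using z z2 by (simp add: veq3)
    then show False using Zn(1) by simp
  qed
  define D where "D = Z$2 * p$3 - Z$3 * p$2"
  define X where "X = cnj (Z$3) * p$3 * w"
  have id: "X + cnj X + D * cnj D = (p$3 * cnj (p$3)) * herm Z Z + (Z$3 * cnj (Z$3)) * herm p p"
    unfolding X_def D_def w_def herm_def by (simp add: algebra_simps)
  then have h0: "X + cnj X + D * cnj D = 0" using Zn(2) pn by simp
  have "D * cnj D = - (X + cnj X)" using h0 add_eq_0_iff by metis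
  then have "complex_of_real (cmod D ^ 2) = complex_of_real (- 2 * Re X)"
    by (simp only: complex_norm_square complex_add_cnj) simp
  then have "cmod D ^ 2 = - 2 * Re X" using of_real_eq_iff by blast
  also have "\<dots> \<le> 2 * cmod X" using abs_Re_le_cmod[of X] by linarith
  also have "cmod X = cmod (Z$3) ^ 2 * cmod (p$3)" using cw by (simp add: X_def norm_mult power2_eq_square)
  finally have Db: "cmod D ^ 2 \<le> 2 * (cmod (Z$3) ^ 2 * cmod (p$3))" .
  have "Z$2/Z$3 - p$2/p$3 = D / (Z$3 * p$3)" using Z3 p3 by (simp add: D_def field_simps)
  then have "Re(Z$2/Z$3) - Re(p$2/p$3) = Re (D / (Z$3 * p$3))" by (metis minus_complex.sel(1))
  then have "(Re(Z$2/Z$3) - Re(p$2/p$3))^2 \<le> cmod (D / (Z$3 * p$3)) ^ 2"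
    by (metis abs_Re_le_cmod abs_ge_zero power2_abs power_mono)
  also have "\<dots> = cmod D ^ 2 / (cmod (Z$3) ^ 2 * cmod (p$3) ^ 2)"
    by (simp add: norm_divide norm_mult power_divide power_mult_distrib)
  also have "\<dots> \<le> 2 * (cmod (Z$3) ^ 2 * cmod (p$3)) / (cmod (Z$3) ^ 2 * cmod (p$3) ^ 2)"
    by (rule divide_right_mono[OF Db]) simp
  also have "\<dots> = 2 / cmod (p$3)" using Z3 p3 by (simp add: field_simps power2_eq_square)
  finally show ?thesis using Z3 by simp
qed
lemma G3yy: "G3 *v yy = vector [2, (-3 - \<i> * sv)/2, -1]"
  by (simp add: mv3 G3_def yy_def veq3 complex_eq_iff)
lemma G2Q: "G2 *v Qv = vector [2, (-3 - \<i> * sv)/2, -1]"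
proof -
  have "matrix_inv G1 *v aa = yy" by (rule minv_app[OF inv_G1 G1yy])
  moreover have "G2 *v Qv = G3 *v (matrix_inv G1 *v (matrix_inv G3 *v (G1 *v Qv)))"
    unfolding G2_def by (simp only: matrix_vector_mul_assoc matrix_mul_assoc)
  ultimately show ?thesis
    by (simp only: G1Q iG3Q G3yy)
qed
definition "x1 = (vector [(1 + \<i> * sv)/2, 1, -1] :: complex^3)"
definition "y1 = (vector [(1 + \<i> * sv)/2, (3 + \<i> * sv)/2, (-1 - \<i> * sv)/2] :: complex^3)"
lemma G2e: "G2 *v vector [0,0,-1] = Qv"
proof -
  have a: "G1 *v vector [0,0,-1] = x1" by (simp add: mv3 G1_def x1_def veq3 complex_eq_iff)
  have "G3 *v y1 = x1" by (simp add: mv3 G3_def x1_def y1_def veq3 complex_eq_iff)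
  then have b: "matrix_inv G3 *v x1 = y1" by (rule minv_app[OF inv_G3])
  have "G1 *v aa = y1" by (simp add: mv3 G1_def aa_def y1_def veq3 complex_eq_iff)
  then have c: "matrix_inv G1 *v y1 = aa" by (rule minv_app[OF inv_G1])
  have "G2 *v vector [0,0,-1] = G3 *v (matrix_inv G1 *v (matrix_inv G3 *v (G1 *v vector [0,0,-1])))"
    unfolding G2_def by (simp only: matrix_vector_mul_assoc matrix_mul_assoc)
  then show ?thesis by (simp only: a b c G3aa)
qed
lemma iG2Q: "matrix_inv G2 *v Qv = vector [0,0,-1]" by (rule minv_app[OF inv_G2 G2e])

lemma G3Q: "G3 *v Qv = vector [1, -1, (-1 + \<i> * sv)/2]"
  by (simp add: mv3 G3_def Qv_def veq3)
lemma sq2: "2 / sqrt 2 \<le> (3/2::real)"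
proof -
  have "2 / sqrt 2 = sqrt 2" by (metis real_div_sqrt zero_le_numeral)
  also have "sqrt 2 \<le> sqrt (9/4)" by simp
  also have "sqrt (9/4) = (3/2::real)" by (simp add: real_sqrt_divide)
  finally show ?thesis .
qed

lemma cm: "cmod ((-1 + \<i> * sv)/2) = sqrt 2" "cmod ((-1 - \<i> * sv)/2) = sqrt 2"
  by (simp_all add: cmod_def power_divide)
lemma S1: assumes "Z \<in> S 1" shows "Z$3 \<noteq> 0 \<and> (Re(Z$2/Z$3) - 3/2)^2 \<le> 2"
proof -
  let ?p = "vector [2, (-3 - \<i> * sv)/2, -1] :: complex^3"
  have h: "herm ?p ?p = 0" by (simp add: herm_def complex_eq_iff power_divide)
  have r: "Re (?p$2/?p$3) = 3/2" by simp
  show ?thesis using key[of Z G2 ?p] assms h r by (simp add: S_def gamma_def G2Q)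
qed
lemma S2: assumes "Z \<in> S 2" shows "Z$3 \<noteq> 0 \<and> (Re(Z$2/Z$3) - 0)^2 \<le> 2"
proof -
  let ?p = "vector [0, 0, -1] :: complex^3"
  have h: "herm ?p ?p = 0" by (simp add: herm_def)
  show ?thesis using key[of Z "matrix_inv G2" ?p] assms h by (simp add: S_def gamma_def iG2Q)
qed
lemma S3: assumes "Z \<in> S 3" shows "Z$3 \<noteq> 0 \<and> (Re(Z$2/Z$3) - 1/4)^2 \<le> 3/2"
proof -
  let ?p = "vector [1, -1, (-1 + \<i> * sv)/2] :: complex^3"
  have h: "herm ?p ?p = 0" by (simp add: herm_def complex_eq_iff power_divide)
  have r: "Re ((-1)/((-1 + \<i> * sv)/2)) = 1/4" by (simp add: Re_divide power_divide)
  have p3: "?p$3 \<noteq> 0" by (simp add: complex_eq_iff)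
  have k: "Z$3 \<noteq> 0 \<and> (Re(Z$2/Z$3) - Re(?p$2/?p$3))^2 \<le> 2 / cmod (?p$3)"
    by (rule key[OF _ G3Q p3 h]) (use assms in \<open>simp add: S_def gamma_def\<close>)
  then show ?thesis unfolding vector_3 r cm using sq2 by auto
qed
lemma S4: assumes "Z \<in> S 4" shows "Z$3 \<noteq> 0 \<and> (Re(Z$2/Z$3) - (-1/4))^2 \<le> 3/2"
proof -
  let ?p = "vector [1, 1, (-1 - \<i> * sv)/2] :: complex^3"
  have h: "herm ?p ?p = 0" by (simp add: herm_def complex_eq_iff power_divide)
  have r: "Re (1/((-1 - \<i> * sv)/2)) = -1/4" by (simp add: Re_divide power_divide)
  have p3: "?p$3 \<noteq> 0" by (simp add: complex_eq_iff)
  have q: "matrix_inv G3 *v Qv = ?p" using iG3Q by (simp add: aa_def)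
  have k: "Z$3 \<noteq> 0 \<and> (Re(Z$2/Z$3) - Re(?p$2/?p$3))^2 \<le> 2 / cmod (?p$3)"
    by (rule key[OF _ q p3 h]) (use assms in \<open>simp add: S_def gamma_def\<close>)
  then show ?thesis unfolding vector_3 r cm using sq2 by auto
qed
lemma G1v: "(G1 *v V)$3 = V$3 \<and> (G1 *v V)$2 = V$2 - V$3"
  by (simp add: mv3 G1_def)
lemma iG1v: "(matrix_inv G1 *v V)$3 = V$3 \<and> (matrix_inv G1 *v V)$2 = V$2 + V$3"
proof -
  have "G1 *v (matrix_inv G1 *v V) = V"
    using minv[OF inv_G1] by (metis matrix_vector_mul_assoc matrix_vector_mul_lid)
  then show ?thesis using G1v[of "matrix_inv G1 *v V"] by auto
qed
lemma mp1: "(matpow G1 n *v W)$3 = W$3 \<and> (matpow G1 n *v W)$2 = W$2 - of_nat n * W$3"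
proof (induction n)
  case 0 then show ?case by simp
next
  case (Suc n)
  have "matpow G1 (Suc n) *v W = G1 *v (matpow G1 n *v W)" by (simp add: matrix_vector_mul_assoc)
  moreover obtain v3 v2 where "(matpow G1 n *v W)$3 = W$3" "(matpow G1 n *v W)$2 = W$2 - of_nat n * W$3" using Suc by blast
  ultimately show ?case by (simp only: G1v) (simp add: algebra_simps)
qed
lemma mp2: "(matpow (matrix_inv G1) n *v W)$3 = W$3 \<and> (matpow (matrix_inv G1) n *v W)$2 = W$2 + of_nat n * W$3"
proof (induction n)
  case 0 then show ?case by simp
next
  case (Suc n)
  have "matpow (matrix_inv G1) (Suc n) *v W = matrix_inv G1 *v (matpow (matrix_inv G1) n *v W)" by (simp add: matrix_vector_mul_assoc)
  moreover obtain v3 v2 where "(matpow (matrix_inv G1) n *v W)$3 = W$3" "(matpow (matrix_inv G1) n *v W)$2 = W$2 + of_nat n * W$3" using Suc by blast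
  ultimately show ?case by (simp only: iG1v) (simp add: algebra_simps)
qed
lemma mz: "(matzpow G1 k *v W)$3 = W$3 \<and> (matzpow G1 k *v W)$2 = W$2 - of_int k * W$3"
proof (cases "0 \<le> k")
  case True
  then show ?thesis using mp1[of "nat k" W] by (simp add: matzpow_def)
next
  case False
  then have "of_nat (nat (-k)) = (- of_int k :: complex)" by simp
  then show ?thesis using False mp2[of "nat (-k)" W] by (simp add: matzpow_def)
qed

lemma pairgen:
  assumes ne: "S i \<inter> act (matzpow G1 k) (S j) \<noteq> {}"
    and Si: "\<And>Z. Z \<in> S i \<Longrightarrow> Z$3 \<noteq> 0 \<and> (Re(Z$2/Z$3) - ci)^2 \<le> ri"
    and Sj: "\<And>Z. Z \<in> S j \<Longrightarrow> Z$3 \<noteq> 0 \<and> (Re(Z$2/Z$3) - cj)^2 \<le> rj"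
  shows "(of_int k + ci - cj)^2 \<le> 2*(ri+rj)"
proof -
  obtain W where W: "W \<in> S j" "matzpow G1 k *v W \<in> S i" using ne unfolding act_def by blast
  define Z where "Z = matzpow G1 k *v W"
  have z3: "Z$3 = W$3" and z2: "Z$2 = W$2 - of_int k * W$3" using mz[of k W] by (auto simp: Z_def)
  have w: "W$3 \<noteq> 0" "(Re(W$2/W$3) - cj)^2 \<le> rj" using Sj[OF W(1)] by auto
  have "Z$2/Z$3 = W$2/W$3 - of_int k" using w(1) by (simp add: z3 z2 field_simps)
  then have re: "Re(Z$2/Z$3) = Re(W$2/W$3) - of_int k" by simp
  have zi: "(Re(Z$2/Z$3) - ci)^2 \<le> ri" using Si W(2) Z_def by blast
  define x where "x = Re(W$2/W$3)"
  have a: "(x - of_int k - ci)^2 \<le> ri" using zi re x_def by simp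
  have b: "(x - cj)^2 \<le> rj" using w x_def by simp
  have "(of_int k + ci - cj)^2 = ((x - cj) - (x - of_int k - ci))^2" by (simp add: algebra_simps)
  also have "\<dots> \<le> 2*((x - cj)^2 + (x - of_int k - ci)^2)"
    using zero_le_power2[of "(x - cj) + (x - of_int k - ci)"] by (simp add: power2_eq_square algebra_simps)
  also have "\<dots> \<le> 2*(ri+rj)" using a b by simp
  finally show ?thesis .
qed

lemma fin:
  assumes ne: "S i \<inter> act (matzpow G1 k) (S j) \<noteq> {}"
    and Si: "\<And>Z. Z \<in> S i \<Longrightarrow> Z$3 \<noteq> 0 \<and> (Re(Z$2/Z$3) - ci)^2 \<le> ri"
    and Sj: "\<And>Z. Z \<in> S j \<Longrightarrow> Z$3 \<noteq> 0 \<and> (Re(Z$2/Z$3) - cj)^2 \<le> rj"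
    and h1: "2*(ri+rj) < (of_int h + 1 + ci - cj)^2" and h2: "0 \<le> of_int h + 1 + ci - cj"
    and l1: "2*(ri+rj) < (of_int l - 1 + ci - cj)^2" and l2: "of_int l - 1 + ci - cj \<le> 0"
  shows "l \<le> k \<and> k \<le> h"
proof -
  have P: "(of_int k + ci - cj)^2 \<le> 2*(ri+rj)" by (rule pairgen[OF ne Si Sj])
  have "k \<le> h"
  proof (rule ccontr)
    assume "\<not> k \<le> h"
    then have "of_int h + 1 + ci - cj \<le> of_int k + ci - cj" by simp
    then have "(of_int h + 1 + ci - cj)^2 \<le> (of_int k + ci - cj)^2" using h2 by (rule power_mono)
    then show False using P h1 by linarith
  qed
  moreover have "l \<le> k"
  proof (rule ccontr)
    assume "\<not> l \<le> k"
    then have "-(of_int l - 1 + ci - cj) \<le> -(of_int k + ci - cj)" by simp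
    then have "(-(of_int l - 1 + ci - cj))^2 \<le> (-(of_int k + ci - cj))^2" using l2 by (intro power_mono) auto
    then have "(of_int l - 1 + ci - cj)^2 \<le> (of_int k + ci - cj)^2" by (simp only: power2_minus)
    then show False using P l1 by linarith
  qed
  ultimately show ?thesis by simp
qed

theorem proposition5p2:
  fixes k :: int
  shows "(S 1 \<inter> act (matzpow G1 k) (S 1) \<noteq> {} \<longrightarrow> -2 \<le> k \<and> k \<le> 2)
       \<and> (S 1 \<inter> act (matzpow G1 k) (S 2) \<noteq> {} \<longrightarrow> -4 \<le> k \<and> k \<le> 1)
       \<and> (S 1 \<inter> act (matzpow G1 k) (S 3) \<noteq> {} \<longrightarrow> -3 \<le> k \<and> k \<le> 1)
       \<and> (S 1 \<inter> act (matzpow G1 k) (S 4) \<noteq> {} \<longrightarrow> -4 \<le> k \<and> k \<le> 0)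
       \<and> (S 2 \<inter> act (matzpow G1 k) (S 2) \<noteq> {} \<longrightarrow> -2 \<le> k \<and> k \<le> 2)
       \<and> (S 2 \<inter> act (matzpow G1 k) (S 3) \<noteq> {} \<longrightarrow> -2 \<le> k \<and> k \<le> 2)
       \<and> (S 2 \<inter> act (matzpow G1 k) (S 4) \<noteq> {} \<longrightarrow> -2 \<le> k \<and> k \<le> 2)
       \<and> (S 3 \<inter> act (matzpow G1 k) (S 3) \<noteq> {} \<longrightarrow> -2 \<le> k \<and> k \<le> 2)
       \<and> (S 3 \<inter> act (matzpow G1 k) (S 4) \<noteq> {} \<longrightarrow> -2 \<le> k \<and> k \<le> 1)
       \<and> (S 4 \<inter> act (matzpow G1 k) (S 4) \<noteq> {} \<longrightarrow> -2 \<le> k \<and> k \<le> 2)"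
  apply (intro conjI)
  subgoal by (rule impI, erule fin[OF _ S1 S1]) (simp_all add: power2_eq_square)
  subgoal by (rule impI, erule fin[OF _ S1 S2]) (simp_all add: power2_eq_square)
  subgoal by (rule impI, erule fin[OF _ S1 S3]) (simp_all add: power2_eq_square)
  subgoal by (rule impI, erule fin[OF _ S1 S4]) (simp_all add: power2_eq_square)
  subgoal by (rule impI, erule fin[OF _ S2 S2]) (simp_all add: power2_eq_square)
  subgoal by (rule impI, erule fin[OF _ S2 S3]) (simp_all add: power2_eq_square)
  subgoal by (rule impI, erule fin[OF _ S2 S4]) (simp_all add: power2_eq_square)
  subgoal by (rule impI, erule fin[OF _ S3 S3]) (simp_all add: power2_eq_square)
  subgoal by (rule impI, erule fin[OF _ S3 S4]) (simp_all add: power2_eq_square)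
  subgoal by (rule impI, erule fin[OF _ S4 S4]) (simp_all add: power2_eq_square)
  done
end
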